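(* For all integers $n\ge 2$ and $k\ge 0$, the number of Fine $n$-paths having exactly $k$ long noninitial ascents equals \[\frac{1}{n+1}\binom{n-2-k}{k}2^{\,n-2-2k}\binom{n+1}{k+1}.\] Consequently the Fine number satisfies $F_n=\frac{1}{n+1}\sum_{k\ge 0}\binom{n-2-k}{k}2^{n-2-2k}\binom{n+1}{k+1}$.
   Context: A Dyck $n$-path is a path from $(0,0)$ to $(2n,0)$ with $n$ upsteps $U=(1,1)$ and $n$ downsteps $D=(1,-1)$ never going below the $x$-axis. A hill is a peak $UD$ whose top vertex is at height $1$. A Fine $n$-path is a Dyck $n$-path with no hills, and $F_n$ is the number of Fine $n$-paths. An ascent is a maximal run of consecutive upsteps; it is long if it has at least two steps and short if it has exactly one step. The initial ascent is the first ascent; all others are noninitial. Binomial coefficients with lower index outside $[0,\text{upper}]$ are $0$. *)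

theory Defs
  imports Complex_Main
begin

text \<open>A lattice path is a list of steps: True = upstep U, False = downstep D.\<close>

definition height :: "bool list \<Rightarrow> nat \<Rightarrow> int" where
  "height p i = int (count_list (take i p) True) - int (count_list (take i p) False)"

definition dyck_path :: "nat \<Rightarrow> bool list \<Rightarrow> bool" where
  "dyck_path n p \<longleftrightarrow> length p = 2 * n \<and> count_list p True = n \<and>
     (\<forall>i \<le> length p. height p i \<ge> 0)"

text \<open>A hill: a peak UD (steps i, i+1) whose top vertex (after step i) is at height 1.\<close>
definition has_hill :: "bool list \<Rightarrow> bool" where
  "has_hill p \<longleftrightarrow> (\<exists>i. Suc i < length p \<and> p ! i \<and> \<not> p ! Suc i \<and> height p (Suc i) = 1)"

definition fine_path :: "nat \<Rightarrow> bool list \<Rightarrow> bool" where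
  "fine_path n p \<longleftrightarrow> dyck_path n p \<and> \<not> has_hill p"

definition fine_number :: "nat \<Rightarrow> nat" where
  "fine_number n = card {p. fine_path n p}"

text \<open>Ascents are identified by their starting positions (maximal runs of upsteps).\<close>
definition ascent_starts :: "bool list \<Rightarrow> nat set" where
  "ascent_starts p = {i. i < length p \<and> p ! i \<and> (i = 0 \<or> \<not> p ! (i - 1))}"

definition ascent_length :: "bool list \<Rightarrow> nat \<Rightarrow> nat" where
  "ascent_length p i = length (takeWhile id (drop i p))"

definition long_noninitial_ascents :: "bool list \<Rightarrow> nat" where
  "long_noninitial_ascents p =
     card {i \<in> ascent_starts p. i \<noteq> Min (ascent_starts p) \<and> ascent_length p i \<ge> 2}"

end

theory Submission
  imports Defs "HOL-Computational_Algebra.Formal_Power_Series" "HOL-Computational_Algebra.Polynomial"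
begin

definition st :: "bool \<Rightarrow> int" where "st b = (if b then 1 else -1)"

fun hgt :: "bool list \<Rightarrow> int" where
  "hgt [] = 0"
| "hgt (b # xs) = st b + hgt xs"

fun nn :: "int \<Rightarrow> bool list \<Rightarrow> bool" where
  "nn h [] = (h \<ge> 0)"
| "nn h (b # xs) = (h \<ge> 0 \<and> nn (h + st b) xs)"

fun hh :: "int \<Rightarrow> bool list \<Rightarrow> bool" where
  "hh h [] = False"
| "hh h [b] = False"
| "hh h (a # b # xs) = ((a \<and> \<not> b \<and> h = 0) \<or> hh (h + st a) (b # xs))"

fun duu :: "bool list \<Rightarrow> nat" where
  "duu (a # b # c # xs) = (if \<not> a \<and> b \<and> c then 1 else 0) + duu (b # c # xs)"
| "duu _ = 0"

definition dyck :: "bool list \<Rightarrow> bool" where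
  "dyck p \<longleftrightarrow> hgt p = 0 \<and> nn 0 p"

lemma hgt_append[simp]: "hgt (xs @ ys) = hgt xs + hgt ys"
  by (induction xs) auto

lemma hgt_count: "int (count_list xs True) - int (count_list xs False) = hgt xs"
  by (induction xs) (auto simp: st_def)

lemma height_hgt: "height p i = hgt (take i p)"
  unfolding height_def by (simp add: hgt_count)

lemma nn_iff: "nn h xs \<longleftrightarrow> (\<forall>i \<le> length xs. h + hgt (take i xs) \<ge> 0)"
proof (induction xs arbitrary: h)
  case Nil
  then show ?case by simp
next
  case (Cons b xs)
  have "(\<forall>i \<le> length (b # xs). h + hgt (take i (b # xs)) \<ge> 0) \<longleftrightarrow>
        h \<ge> 0 \<and> (\<forall>i \<le> length xs. h + st b + hgt (take i xs) \<ge> 0)"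
    (is "?L \<longleftrightarrow> ?R")
  proof
    assume ?L
    show ?R
    proof (intro conjI allI impI)
      show "h \<ge> 0" using spec[OF \<open>?L\<close>, of 0] by simp
      fix i assume "i \<le> length xs"
      then show "h + st b + hgt (take i xs) \<ge> 0" using spec[OF \<open>?L\<close>, of "Suc i"] by (simp add: add.assoc)
    qed
  next
    assume ?R
    show ?L
    proof (intro allI impI)
      fix i assume "i \<le> length (b # xs)"
      then show "h + hgt (take i (b # xs)) \<ge> 0" using \<open>?R\<close>
        by (cases i) (auto simp: add.assoc)
    qed
  qed
  then show ?case using Cons by simp
qed

lemma nn_append: "nn h (xs @ ys) \<longleftrightarrow> nn h xs \<and> nn (h + hgt xs) ys"
proof (induction xs arbitrary: h)
  case Nil
  then show ?case by (cases ys) auto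
next
  case (Cons a xs)
  then show ?case by (auto simp: add.assoc)
qed

lemma nn_ge: "nn h xs \<Longrightarrow> h + hgt xs \<ge> 0"
proof (induction xs arbitrary: h)
  case (Cons a xs)
  then show ?case using Cons.IH[of "h + st a"] by (simp add: add.assoc)
qed simp

lemma nn_mono: "nn h xs \<Longrightarrow> h \<le> h' \<Longrightarrow> nn h' xs"
  by (induction xs arbitrary: h h') auto

lemma dyck_path_iff: "dyck_path n p \<longleftrightarrow> length p = 2 * n \<and> dyck p"
proof -
  have cnt: "int (count_list p True) + int (count_list p False) = int (length p)"
    by (induction p) auto
  show ?thesis
    unfolding dyck_path_def dyck_def height_hgt nn_iff
    using cnt hgt_count[of p] by auto
qed

lemma has_hill_iff_gen:
  "hh h p \<longleftrightarrow> (\<exists>i. Suc i < length p \<and> p ! i \<and> \<not> p ! Suc i \<and> h + hgt (take (Suc i) p) = 1)"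
proof (induction h p rule: hh.induct)
  case (1 h)
  then show ?case by simp
next
  case (2 h b)
  then show ?case by simp
next
  case (3 h a b xs)
  have ex: "\<And>P. (\<exists>i. P i) \<longleftrightarrow> P 0 \<or> (\<exists>i. P (Suc i))"
    by (metis not0_implies_Suc)
  show ?case
    apply (subst ex)
    using 3 by (auto simp: st_def add.assoc)
qed

lemma has_hill_iff: "has_hill p \<longleftrightarrow> hh 0 p"
  unfolding has_hill_def has_hill_iff_gen height_hgt by simp

lemma duu_card: "duu p = card {i. i + 2 < length p \<and> \<not> p ! i \<and> p ! (i+1) \<and> p ! (i+2)}"
proof (induction p rule: duu.induct)
  case (1 a b c xs)
  let ?S = "\<lambda>p. {i. i + 2 < length p \<and> \<not> p ! i \<and> p ! (i+1) \<and> p ! (i+2)}"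
  have eq: "?S (a # b # c # xs) = (if \<not> a \<and> b \<and> c then {0} else {}) \<union> Suc ` ?S (b # c # xs)"
    apply (rule set_eqI)
    subgoal for i by (cases i) auto
    done
  have fin: "finite (?S (b # c # xs))" by (rule finite_subset[of _ "{..<length (b#c#xs)}"]) auto
  have "card (?S (a # b # c # xs)) = (if \<not> a \<and> b \<and> c then 1 else 0) + card (?S (b # c # xs))"
    unfolding eq using fin by (simp add: card_image)
  then show ?case using 1 by simp
next
  case ("2_1")
  then show ?case by simp
next
  case ("2_2" v)
  then show ?case by simp
next
  case ("2_3" v va)
  then show ?case by simp
qed

lemma takeWhile_len2: "2 \<le> length (takeWhile id xs) \<longleftrightarrow> (\<exists>a b ys. xs = a # b # ys \<and> a \<and> b)"
  by (cases xs rule: remdups_adj.cases) auto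

lemma lna_duu:
  assumes "p = [] \<or> p ! 0"
  shows "long_noninitial_ascents p = duu p"
proof (cases "p = []")
  case True
  then show ?thesis by (simp add: long_noninitial_ascents_def ascent_starts_def)
next
  case False
  with assms have p0: "p ! 0" by simp
  have z: "0 \<in> ascent_starts p" using False p0 by (simp add: ascent_starts_def)
  have fin: "finite (ascent_starts p)" unfolding ascent_starts_def by simp
  have mn: "Min (ascent_starts p) = 0" using z fin by (meson Min_eqI le0)
  have al: "\<And>i. i < length p \<Longrightarrow> (ascent_length p i \<ge> 2 \<longleftrightarrow> Suc i < length p \<and> p ! i \<and> p ! Suc i)"
  proof -
    fix i assume i: "i < length p"
    show "(ascent_length p i \<ge> 2 \<longleftrightarrow> Suc i < length p \<and> p ! i \<and> p ! Suc i)"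
    proof (cases "Suc i < length p")
      case True
      then have "drop i p = p ! i # p ! Suc i # drop (Suc (Suc i)) p"
        by (metis Cons_nth_drop_Suc Suc_lessD)
      then show ?thesis unfolding ascent_length_def takeWhile_len2 using True by auto
    next
      case False
      then have "drop i p = [p ! i]" using i
        by (metis Cons_nth_drop_Suc Suc_leI drop_all le_neq_implies_less)
      then show ?thesis unfolding ascent_length_def takeWhile_len2 using False by auto
    qed
  qed
  have eq: "{i \<in> ascent_starts p. i \<noteq> Min (ascent_starts p) \<and> ascent_length p i \<ge> 2}
      = Suc ` {i. i + 2 < length p \<and> \<not> p ! i \<and> p ! (i+1) \<and> p ! (i+2)}"
  proof (rule set_eqI)
    fix j
    show "j \<in> {i \<in> ascent_starts p. i \<noteq> Min (ascent_starts p) \<and> ascent_length p i \<ge> 2} \<longleftrightarrow>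
          j \<in> Suc ` {i. i + 2 < length p \<and> \<not> p ! i \<and> p ! (i+1) \<and> p ! (i+2)}"
      unfolding mn
      apply (cases j)
      using al by (auto simp: ascent_starts_def)
  qed
  show ?thesis unfolding long_noninitial_ascents_def eq duu_card
    by (simp add: card_image)
qed

lemma duu_snocF: "duu (xs @ [False]) = duu xs"
proof (induction xs rule: duu.induct)
  case (1 a b c xs)
  then show ?case by simp
next
  case "2_1" then show ?case by simp
next
  case ("2_2" v) then show ?case by simp
next
  case ("2_3" v va) then show ?case by simp
qed

definition pat :: "bool \<Rightarrow> bool list \<Rightarrow> nat" where
  "pat a zs = (if 2 \<le> length zs \<and> \<not> a \<and> zs ! 0 \<and> zs ! 1 then 1 else 0)"

lemma duu_Cons: "duu (a # zs) = pat a zs + duu zs"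
  by (cases zs rule: remdups_adj.cases) (auto simp: pat_def)

lemma duu_app: "duu (xs @ False # ys) = duu (xs @ [False]) + duu (False # ys)"
proof (induction xs)
  case Nil
  then show ?case by simp
next
  case (Cons a xs)
  have "pat a (xs @ False # ys) = pat a (xs @ [False])"
    unfolding pat_def by (cases xs rule: remdups_adj.cases) (auto simp: nth_append)
  then show ?case using Cons by (simp add: duu_Cons[of a])
qed

lemma duu_True: "duu (True # ys) = duu ys"
  by (cases ys rule: remdups_adj.cases) auto

lemma duu_FT: "duu (False # True # ys) = (if ys \<noteq> [] \<and> hd ys then 1 else 0) + duu (True # ys)"
  by (cases ys) auto

lemma hh_app: "hh h (xs @ b # ys) \<longleftrightarrow> hh h (xs @ [b]) \<or> hh (h + hgt xs) (b # ys)"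
proof (induction xs arbitrary: h)
  case Nil
  then show ?case by simp
next
  case (Cons a xs)
  show ?case
  proof (cases xs)
    case Nil
    then show ?thesis by simp
  next
    case (Cons c xs')
    then show ?thesis using Cons.IH[of "h + st a"] \<open>xs = c # xs'\<close> by (auto simp: add.assoc)
  qed
qed

lemma hh_snocT: "hh h (xs @ [True]) \<longleftrightarrow> hh h xs"
proof (induction xs arbitrary: h)
  case Nil
  then show ?case by simp
next
  case (Cons a xs)
  then show ?case by (cases xs) auto
qed

lemma hh_high: "nn g xs \<Longrightarrow> h \<ge> g + 1 \<Longrightarrow> \<not> hh h (xs @ [b])"
proof (induction xs arbitrary: g h)
  case Nil
  then show ?case by simp
next
  case (Cons a xs)
  have "\<not> hh (h + st a) (xs @ [b])"
    using Cons.IH[of "g + st a" "h + st a"] Cons.prems by simp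
  moreover have "h \<noteq> 0" using Cons.prems by simp
  ultimately show ?case by (cases xs) auto
qed

lemma dyck_Nil[simp]: "dyck []" by (simp add: dyck_def)

lemma nn_h: "nn h xs \<Longrightarrow> h \<ge> 0"
  by (cases xs) auto

lemma dyck_hd: "dyck (b # xs) \<Longrightarrow> b"
  by (auto simp: dyck_def st_def split: if_splits dest: nn_h)

lemma dyck_last: assumes "dyck q" "q \<noteq> []" shows "\<exists>q'. q = q' @ [False]"
proof -
  obtain q' b where q: "q = q' @ [b]" using assms(2) by (metis rev_exhaust)
  have "b = False"
  proof (rule ccontr)
    assume "b \<noteq> False"
    then have "hgt q' = -1" using assms(1) q by (simp add: dyck_def st_def)
    moreover have "nn 0 q'" using assms(1) q by (simp add: dyck_def nn_append)
    ultimately show False using nn_ge[of 0 q'] by simp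
  qed
  then show ?thesis using q by blast
qed

lemma first_drop:
  "hgt xs \<le> -1 \<Longrightarrow> \<exists>ys zs. xs = ys @ False # zs \<and> dyck ys"
proof (induction "length xs" arbitrary: xs rule: less_induct)
  case less
  then obtain b xs' where xs: "xs = b # xs'" by (cases xs) auto
  show ?case
  proof (cases b)
    case False
    then show ?thesis using xs by (intro exI[of _ "[]"] exI[of _ xs']) auto
  next
    case True
    then have "hgt xs' \<le> -1" using less.prems xs by (simp add: st_def)
    then obtain ys1 zs1 where 1: "xs' = ys1 @ False # zs1" "dyck ys1"
      using less.hyps[of xs'] xs by auto
    have "hgt zs1 \<le> -1" using less.prems xs True 1 by (simp add: st_def dyck_def)
    then obtain ys2 zs2 where 2: "zs1 = ys2 @ False # zs2" "dyck ys2"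
      using less.hyps[of zs1] xs 1 by auto
    have "dyck (True # ys1 @ False # ys2)"
      using 1(2) 2(2) by (auto simp: dyck_def st_def nn_append intro: nn_mono)
    then show ?thesis using xs True 1 2 by (intro exI[of _ "True # ys1 @ False # ys2"] exI[of _ zs2]) auto
  qed
qed

lemma dyck_decomp:
  "dyck p \<Longrightarrow> p \<noteq> [] \<Longrightarrow> \<exists>q r. p = q @ True # r @ [False] \<and> dyck q \<and> dyck r"
proof (induction "length p" arbitrary: p rule: less_induct)
  case less
  then obtain b s where p: "p = b # s" by (cases p) auto
  have b: b using dyck_hd less.prems p by blast
  have "hgt s \<le> -1" using less.prems p b by (simp add: dyck_def st_def)
  then obtain ys zs where yz: "s = ys @ False # zs" "dyck ys" using first_drop by blast
  have dz: "dyck zs" using less.prems p b yz by (auto simp: dyck_def st_def nn_append)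
  show ?case
  proof (cases "zs = []")
    case True
    then show ?thesis using p b yz by (intro exI[of _ "[]"] exI[of _ ys]) auto
  next
    case False
    then obtain q' r where qr: "zs = q' @ True # r @ [False]" "dyck q'" "dyck r"
      using less.hyps[of zs] dz p yz by auto
    have "dyck (True # ys @ False # q')" using yz(2) qr(2)
      by (auto simp: dyck_def st_def nn_append intro: nn_mono)
    then show ?thesis using p b yz qr
      by (intro exI[of _ "True # ys @ False # q'"] exI[of _ r]) auto
  qed
qed

lemma decomp_len_le:
  assumes "q @ True # r @ [False] = q' @ True # r' @ [False]" "dyck q" "dyck r" "dyck q'" "dyck r'"
  shows "length q' \<le> length q"
proof (rule ccontr)
  assume "\<not> length q' \<le> length q"
  then obtain us where us: "q' = q @ us" "us \<noteq> []" "us @ True # r' @ [False] = True # r @ [False]"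
    using assms(1) by (auto simp: append_eq_append_conv2)
  then obtain us' where us': "us = True # us'" by (cases us) auto
  have "r @ [False] = us' @ True # r' @ [False]" using us(3) us' by simp
  then have "r = us' @ True # r'" by (metis append_Cons append_assoc butlast_snoc)
  then have "nn 0 us'" using assms(3) by (simp add: dyck_def nn_append)
  then have "hgt us' \<ge> 0" using nn_ge by fastforce
  moreover have "hgt q' = 0" using assms(4) by (simp add: dyck_def)
  ultimately show False using us us' assms(2) by (simp add: dyck_def st_def)
qed

lemma decomp_inj:
  assumes "q @ True # r @ [False] = q' @ True # r' @ [False]" "dyck q" "dyck r" "dyck q'" "dyck r'"
  shows "q = q' \<and> r = r'"
proof -
  have "length q = length q'" using decomp_len_le[OF assms] decomp_len_le[OF assms(1)[symmetric] assms(4,5,2,3)] by simp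
  then show ?thesis using assms(1) by auto
qed

lemma decomp_dyck: "dyck q \<Longrightarrow> dyck r \<Longrightarrow> dyck (q @ True # r @ [False])"
  by (auto simp: dyck_def st_def nn_append intro: nn_mono)

lemma decomp_hh:
  assumes "dyck q" "dyck r"
  shows "hh 0 (q @ True # r @ [False]) \<longleftrightarrow> hh 0 q \<or> r = []"
proof -
  have h: "hgt q = 0" using assms by (simp add: dyck_def)
  have 1: "hh 0 (q @ True # r @ [False]) \<longleftrightarrow> hh 0 q \<or> hh 0 (True # r @ [False])"
    using hh_app[of 0 q True "r @ [False]"] h hh_snocT by simp
  have 2: "hh 0 (True # r @ [False]) \<longleftrightarrow> r = []"
  proof (cases r)
    case Nil
    then show ?thesis by simp
  next
    case (Cons c r')
    then have c using assms(2) dyck_hd by blast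
    have "nn 0 r" using assms(2) by (simp add: dyck_def)
    then have "\<not> hh 1 (r @ [False])" using hh_high[of 0 r 1] by simp
    then show ?thesis using Cons \<open>c\<close> by (simp add: st_def)
  qed
  show ?thesis using 1 2 by simp
qed

lemma decomp_duu:
  assumes "dyck q" "dyck r"
  shows "duu (q @ True # r @ [False]) = duu q + duu r + (if q \<noteq> [] \<and> r \<noteq> [] then 1 else 0)"
proof -
  have A: "duu (True # r @ [False]) = duu r" by (simp add: duu_True duu_snocF)
  have B: "(if r @ [False] \<noteq> [] \<and> hd (r @ [False]) then 1 else 0) = (if r \<noteq> [] then 1 else (0::nat))"
    using assms(2) by (cases r) (auto dest: dyck_hd)
  show ?thesis
  proof (cases "q = []")
    case True
    then show ?thesis using A by simp
  next
    case False
    then obtain q' where q: "q = q' @ [False]" using dyck_last assms(1) by blast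
    have "duu (q @ True # r @ [False]) = duu (q' @ False # True # r @ [False])" using q by simp
    also have "\<dots> = duu q + duu (False # True # r @ [False])"
      using duu_app[of q' "True # r @ [False]"] q by simp
    also have "\<dots> = duu q + duu r + (if r \<noteq> [] then 1 else 0)" using duu_FT[of "r @ [False]"] A B by simp
    finally show ?thesis using False by simp
  qed
qed

lemma dyck_lna: "dyck p \<Longrightarrow> long_noninitial_ascents p = duu p"
  by (rule lna_duu) (cases p, auto dest: dyck_hd)



definition Dy :: "nat \<Rightarrow> bool list set" where "Dy n = {p. length p = 2 * n \<and> dyck p}"
definition Fi :: "nat \<Rightarrow> bool list set" where "Fi n = {p \<in> Dy n. \<not> hh 0 p}"

definition t0 :: "real poly" where "t0 = monom 1 1"

definition Dp :: "nat \<Rightarrow> real poly" where "Dp n = (\<Sum>p\<in>Dy n. t0 ^ duu p)"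
definition Fp :: "nat \<Rightarrow> real poly" where "Fp n = (\<Sum>p\<in>Fi n. t0 ^ duu p)"

lemma fin_Dy: "finite (Dy n)"
proof -
  have "Dy n \<subseteq> {xs. set xs \<subseteq> UNIV \<and> length xs = 2 * n}" by (auto simp: Dy_def)
  then show ?thesis using finite_lists_length_eq[of "UNIV :: bool set"] finite_subset by auto
qed

lemma fin_Fi: "finite (Fi n)"
  using fin_Dy by (simp add: Fi_def)

lemma len_hgt: "int (length xs) + hgt xs = 2 * int (count_list xs True)"
  by (induction xs) (auto simp: st_def)

lemma dyck_even: "dyck q \<Longrightarrow> length q = 2 * (length q div 2)"
  using len_hgt[of q] by (simp add: dyck_def) presburger

lemma Dy0: "Dy 0 = {[]}" by (auto simp: Dy_def)

definition phi :: "bool list \<times> bool list \<Rightarrow> bool list" where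
  "phi x = fst x @ True # snd x @ [False]"

definition SS :: "nat \<Rightarrow> (bool list \<times> bool list) set" where
  "SS m = (\<Union>a\<in>{..m}. Dy a \<times> Dy (m - a))"

lemma Dy_Suc: "Dy (Suc m) = phi ` SS m"
proof
  show "Dy (Suc m) \<subseteq> phi ` SS m"
  proof
    fix p assume p: "p \<in> Dy (Suc m)"
    then have "dyck p" "p \<noteq> []" by (auto simp: Dy_def)
    then obtain q r where qr: "p = q @ True # r @ [False]" "dyck q" "dyck r"
      using dyck_decomp by blast
    define a where "a = length q div 2"
    have la: "length q = 2 * a" using dyck_even[OF qr(2)] a_def by simp
    have lr: "length r = 2 * (length r div 2)" using dyck_even[OF qr(3)] .
    have "length q + length r = 2 * m" using p qr by (simp add: Dy_def)
    then have am: "a \<le> m" "length r = 2 * (m - a)" using la lr by linarith+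
    then have "(q, r) \<in> SS m" using qr la by (auto simp: SS_def Dy_def)
    then show "p \<in> phi ` SS m" using qr by (intro image_eqI[of _ _ "(q,r)"]) (auto simp: phi_def)
  qed
next
  show "phi ` SS m \<subseteq> Dy (Suc m)"
    by (auto simp: SS_def Dy_def phi_def decomp_dyck)
qed

lemma inj_phi: "inj_on phi (SS m)"
proof (rule inj_onI)
  fix x y assume xy: "x \<in> SS m" "y \<in> SS m" "phi x = phi y"
  have "dyck (fst x)" "dyck (snd x)" "dyck (fst y)" "dyck (snd y)"
    using xy(1,2) by (auto simp: SS_def Dy_def)
  then show "x = y" using decomp_inj[of "fst x" "snd x" "fst y" "snd y"] xy(3)
    by (simp add: phi_def prod_eq_iff)
qed

lemma sum_Dy_Suc:
  "(\<Sum>p\<in>Dy (Suc m). f p) = (\<Sum>a\<le>m. \<Sum>q\<in>Dy a. \<Sum>r\<in>Dy (m - a). f (q @ True # r @ [False]))"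
proof -
  have "(\<Sum>p\<in>Dy (Suc m). f p) = (\<Sum>x\<in>SS m. f (phi x))"
    unfolding Dy_Suc by (rule sum.reindex[OF inj_phi, unfolded comp_def])
  also have "\<dots> = (\<Sum>a\<le>m. \<Sum>x\<in>Dy a \<times> Dy (m - a). f (phi x))"
    unfolding SS_def
    apply (rule sum.UNION_disjoint)
      apply simp
     apply (simp add: fin_Dy)
    apply (auto simp: Dy_def)
    done
  also have "\<dots> = (\<Sum>a\<le>m. \<Sum>q\<in>Dy a. \<Sum>r\<in>Dy (m - a). f (q @ True # r @ [False]))"
    by (simp add: sum.cartesian_product phi_def case_prod_beta)
  finally show ?thesis .
qed

lemma Dy_nil: "r \<in> Dy b \<Longrightarrow> (r = []) = (b = 0)"
  by (auto simp: Dy_def)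

lemma Dp_Suc: "Dp (Suc m) = (\<Sum>a\<le>m. (if a \<noteq> 0 \<and> m - a \<noteq> 0 then t0 else 1) * Dp a * Dp (m - a))"
proof -
  have "Dp (Suc m) = (\<Sum>a\<le>m. \<Sum>q\<in>Dy a. \<Sum>r\<in>Dy (m - a). t0 ^ duu (q @ True # r @ [False]))"
    unfolding Dp_def by (rule sum_Dy_Suc)
  also have "\<dots> = (\<Sum>a\<le>m. \<Sum>q\<in>Dy a. \<Sum>r\<in>Dy (m - a).
        (if a \<noteq> 0 \<and> m - a \<noteq> 0 then t0 else 1) * (t0 ^ duu q * t0 ^ duu r))"
    apply (intro sum.cong refl)
    subgoal for a q r
      using decomp_duu[of q r] Dy_nil[of q a] Dy_nil[of r "m - a"]
      by (auto simp: Dy_def power_add)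
    done
  also have "\<dots> = (\<Sum>a\<le>m. (if a \<noteq> 0 \<and> m - a \<noteq> 0 then t0 else 1) *
       ((\<Sum>q\<in>Dy a. t0 ^ duu q) * (\<Sum>r\<in>Dy (m - a). t0 ^ duu r)))"
    by (simp only: sum_distrib_left sum_distrib_right, rule sum.cong[OF refl], rule sum.swap)
  also have "\<dots> = (\<Sum>a\<le>m. (if a \<noteq> 0 \<and> m - a \<noteq> 0 then t0 else 1) * Dp a * Dp (m - a))"
    by (simp only: Dp_def mult.assoc)
  finally show ?thesis .
qed

lemma Fp_Suc: "Fp (Suc m) = (\<Sum>a\<le>m. (if a \<noteq> 0 then t0 else 1) * Fp a * (if m - a \<noteq> 0 then Dp (m - a) else 0))"
proof -
  have "Fp (Suc m) = (\<Sum>p\<in>Dy (Suc m). if \<not> hh 0 p then t0 ^ duu p else 0)"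
    unfolding Fp_def Fi_def using fin_Dy by (simp add: sum.inter_filter)
  also have "\<dots> = (\<Sum>a\<le>m. \<Sum>q\<in>Dy a. \<Sum>r\<in>Dy (m - a).
       (if \<not> hh 0 (q @ True # r @ [False]) then t0 ^ duu (q @ True # r @ [False]) else 0))"
    by (rule sum_Dy_Suc)
  also have "\<dots> = (\<Sum>a\<le>m. \<Sum>q\<in>Dy a. \<Sum>r\<in>Dy (m - a).
        (if a \<noteq> 0 then t0 else 1) * ((if \<not> hh 0 q then t0 ^ duu q else 0) *
          (if m - a \<noteq> 0 then t0 ^ duu r else 0)))"
    apply (intro sum.cong refl)
    subgoal for a q r
      using decomp_duu[of q r] decomp_hh[of q r] Dy_nil[of q a] Dy_nil[of r "m - a"]
      by (auto simp: Dy_def power_add)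
    done
  also have "\<dots> = (\<Sum>a\<le>m. (if a \<noteq> 0 then t0 else 1) * ((\<Sum>q\<in>Dy a. if \<not> hh 0 q then t0 ^ duu q else 0) *
        (\<Sum>r\<in>Dy (m - a). if m - a \<noteq> 0 then t0 ^ duu r else 0)))"
    by (simp only: sum_distrib_left sum_distrib_right, rule sum.cong[OF refl], rule sum.swap)
  also have "\<dots> = (\<Sum>a\<le>m. (if a \<noteq> 0 then t0 else 1) * Fp a * (if m - a \<noteq> 0 then Dp (m - a) else 0))"
    apply (intro sum.cong refl)
    subgoal for a
      unfolding Fp_def Fi_def sum.inter_filter[OF fin_Dy] Dp_def by simp
    done
  finally show ?thesis .
qed

lemma Dp0: "Dp 0 = 1" by (simp add: Dp_def Dy0)
lemma Fi0: "Fi 0 = {[]}" by (auto simp: Fi_def Dy0)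
lemma Fp0: "Fp 0 = 1" by (simp add: Fp_def Fi0)

definition DD :: "real poly fps" where "DD = Abs_fps Dp"
definition WW :: "real poly fps" where "WW = DD - 1"
definition FF :: "real poly fps" where "FF = Abs_fps Fp"
definition GG :: "real poly fps" where "GG = FF - 1"
abbreviation TT :: "real poly fps" where "TT \<equiv> fps_const t0"

lemma WW_nth: "fps_nth WW n = (if n = 0 then 0 else Dp n)"
  by (simp add: WW_def DD_def Dp0)

lemma GG_nth: "fps_nth GG n = (if n = 0 then 0 else Fp n)"
  by (simp add: GG_def FF_def Fp0)

lemma WW_eq: "WW = fps_X * (1 + 2 * WW + TT * WW ^ 2)"
proof -
  have "DD = 1 + fps_X * (DD * DD + fps_const (t0 - 1) * (WW * WW))"
  proof (rule fps_ext)
    fix n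
    show "fps_nth DD n = fps_nth (1 + fps_X * (DD * DD + fps_const (t0 - 1) * (WW * WW))) n"
    proof (cases n)
      case 0
      then show ?thesis by (simp add: DD_def Dp0)
    next
      case (Suc m)
      have "fps_nth DD n = (\<Sum>a\<le>m. (if a \<noteq> 0 \<and> m - a \<noteq> 0 then t0 else 1) * Dp a * Dp (m - a))"
        using Suc Dp_Suc by (simp add: DD_def)
      also have "\<dots> = (\<Sum>a=0..m. fps_nth DD a * fps_nth DD (m - a) + (t0 - 1) * (fps_nth WW a * fps_nth WW (m - a)))"
        apply (rule sum.cong)
        apply (auto simp: atLeast0AtMost DD_def WW_nth algebra_simps)
        done
      also have "\<dots> = fps_nth (DD * DD + fps_const (t0 - 1) * (WW * WW)) m"
        by (simp only: fps_add_nth fps_mult_left_const_nth) (simp only: fps_mult_nth sum.distrib sum_distrib_left)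
      finally show ?thesis using Suc by simp
    qed
  qed
  moreover have c: "fps_const (t0 - 1) = TT - 1" by (metis fps_const_1_eq_1 fps_const_sub)
  ultimately have "WW + 1 = 1 + fps_X * ((WW + 1) * (WW + 1) + (TT - 1) * (WW * WW))"
    by (simp add: WW_def)
  then show ?thesis by (simp add: algebra_simps power2_eq_square)
qed

lemma GG_eq: "GG = fps_X * (1 + TT * GG) * WW"
proof -
  have "FF = 1 + fps_X * ((1 + TT * GG) * WW)"
  proof (rule fps_ext)
    fix n
    show "fps_nth FF n = fps_nth (1 + fps_X * ((1 + TT * GG) * WW)) n"
    proof (cases n)
      case 0
      then show ?thesis by (simp add: FF_def Fp0)
    next
      case (Suc m)
      have "fps_nth FF n = (\<Sum>a\<le>m. (if a \<noteq> 0 then t0 else 1) * Fp a * (if m - a \<noteq> 0 then Dp (m - a) else 0))"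
        using Suc Fp_Suc by (simp add: FF_def)
      also have "\<dots> = (\<Sum>a=0..m. fps_nth (1 + TT * GG) a * fps_nth WW (m - a))"
        apply (rule sum.cong)
        apply (auto simp: atLeast0AtMost GG_nth WW_nth Fp0)
        done
      also have "\<dots> = fps_nth ((1 + TT * GG) * WW) m"
        by (simp add: fps_mult_nth)
      finally show ?thesis using Suc by simp
    qed
  qed
  then show ?thesis by (simp add: GG_def algebra_simps)
qed

lemma coeff_Fp: "coeff (Fp n) k = real (card {p \<in> Fi n. duu p = k})"
proof -
  have "coeff (Fp n) k = (\<Sum>p\<in>Fi n. if duu p = k then 1 else 0)"
    unfolding Fp_def coeff_sum t0_def monom_power by simp
  also have "\<dots> = real (card {p \<in> Fi n. duu p = k})"
    using fin_Fi[of n] by (simp add: sum.If_cases Int_def)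
  finally show ?thesis .
qed



definition ifac :: "int \<Rightarrow> real" where "ifac z = (if z < 0 then 0 else 1 / fact (nat z))"

lemma ifac_pred: "ifac (z - 1) = of_int z * ifac z"
proof (cases "z \<le> 0")
  case True
  then show ?thesis by (cases "z = 0") (auto simp: ifac_def)
next
  case False
  define n where "n = nat z - 1"
  have n: "z = int (Suc n)" using False by (simp add: n_def)
  have "ifac (z - 1) = 1 / fact n" using n by (simp add: ifac_def)
  moreover have "ifac z = 1 / fact (Suc n)" using n by (simp add: ifac_def del: of_nat_Suc)
  moreover have "(fact (Suc n) :: real) = real (Suc n) * fact n" by (rule fact_Suc)
  ultimately show ?thesis using n by (simp del: of_nat_Suc)
qed

lemma ifac_neg: "z < 0 \<Longrightarrow> ifac z = 0" by (simp add: ifac_def)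

definition cc :: "nat \<Rightarrow> nat \<Rightarrow> nat \<Rightarrow> int" where "cc m n k = int n - int m - 2 * int k"

definition Pc :: "nat \<Rightarrow> nat \<Rightarrow> nat \<Rightarrow> real" where
  "Pc m n k = (if m = 0 then (if n = 0 \<and> k = 0 then 1 else 0)
     else real m * fact (n - 1) * 2 powi (cc m n k) * ifac (int k) * ifac (int (m + k)) * ifac (cc m n k))"

lemma Pc_rec:
  assumes m: "m \<ge> 1"
  shows "Pc m (Suc n) k = Pc (m - 1) n k + 2 * Pc m n k + (if k = 0 then 0 else Pc (m + 1) n (k - 1))"
proof (cases "n = 0 \<and> m = 1 \<and> k = 0")
  case True
  then show ?thesis by (simp add: Pc_def cc_def ifac_def)
next
  case False
  define c where "c = cc m (Suc n) k"
  define F where "F = (fact (n - 1) :: real)"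
  define I1 where "I1 = ifac (int k)"
  define I2 where "I2 = ifac (int (m + k))"
  define I3 where "I3 = ifac c"
  have e1: "Pc (m - 1) n k = real (m - 1) * F * 2 powi c * I1 * ((m + k) * I2) * I3"
  proof (cases "m = 1")
    case True
    then show ?thesis using False by (auto simp: Pc_def)
  next
    case False
    have "ifac (int (m - 1 + k)) = (m + k) * I2"
      using ifac_pred[of "int (m + k)"] m by (simp add: I2_def of_nat_diff)
    then show ?thesis using False m
      by (simp add: Pc_def F_def c_def cc_def I1_def I3_def of_nat_diff algebra_simps)
  qed
  have e2: "Pc m n k = real m * F * (2 powi c / 2) * I1 * I2 * (c * I3)"
  proof -
    have "cc m n k = c - 1" by (simp add: c_def cc_def)
    moreover have "(2::real) powi (c - 1) = 2 powi c / 2" by (simp add: power_int_diff)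
    ultimately show ?thesis using m ifac_pred[of c]
      by (simp add: Pc_def F_def I1_def I2_def I3_def)
  qed
  have e3: "(if k = 0 then 0 else Pc (m + 1) n (k - 1)) = real (m + 1) * F * 2 powi c * (k * I1) * I2 * I3"
  proof (cases "k = 0")
    case True
    then show ?thesis by simp
  next
    case False
    have "cc (m + 1) n (k - 1) = c" using False by (simp add: c_def cc_def of_nat_diff)
    moreover have "ifac (int (k - 1)) = k * I1" using ifac_pred[of "int k"] False
      by (simp add: I1_def of_nat_diff)
    moreover have "m + 1 + (k - 1) = m + k" using False by simp
    ultimately show ?thesis using False
      by (simp add: Pc_def F_def I2_def I3_def)
  qed
  have lhs: "Pc m (Suc n) k = real m * (real n * F) * 2 powi c * I1 * I2 * I3"
  proof (cases "n = 0")
    case True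
    then have "c < 0" using False m by (cases "m = 1") (auto simp: c_def cc_def)
    then show ?thesis using m by (simp add: Pc_def I3_def ifac_neg c_def)
  next
    case False
    then have "fact n = real n * F" by (simp add: F_def fact_reduce)
    then show ?thesis using m by (simp add: Pc_def c_def I1_def I2_def I3_def)
  qed
  have cv: "(of_int c :: real) = real n + 1 - real m - 2 * real k" by (simp add: c_def cc_def)
  define Z where "Z = F * 2 powi c * I1 * I2 * I3"
  have key: "real m * real n = real (m - 1) * (real m + real k) + real m * of_int c + real (m + 1) * real k"
    using m by (simp add: cv of_nat_diff algebra_simps)
  have "real (m - 1) * F * 2 powi c * I1 * ((m + k) * I2) * I3 + 2 * (real m * F * (2 powi c / 2) * I1 * I2 * (c * I3))
      + real (m + 1) * F * 2 powi c * (k * I1) * I2 * I3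
      = Z * (real (m - 1) * (real m + real k) + real m * of_int c + real (m + 1) * real k)"
    unfolding Z_def by (simp add: algebra_simps)
  also have "\<dots> = Z * (real m * real n)" using key by simp
  finally show ?thesis unfolding lhs e1 e2 e3 Z_def by (simp add: algebra_simps)
qed

definition Rc :: "nat \<Rightarrow> nat \<Rightarrow> nat \<Rightarrow> real" where
  "Rc m n k = fact (n - 1) * 2 powi (cc m n k) *
     (real m * (real m + real k - 1) + (real m - 1) * of_int (cc m n k)) *
     ifac (int k) * ifac (int (m + k) - 1) * ifac (cc m n k) /
     ((real n - real k) * (real n - real k - 1))"

lemma Rc_zero: "m > n \<Longrightarrow> Rc m n k = 0"
  by (simp add: Rc_def ifac_neg cc_def)

lemma Rc_tel:
  assumes m: "m \<ge> 2"
  shows "Rc m n k + 2 * Rc (m + 1) n k = Pc m n k"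
proof -
  define c where "c = cc m n k"
  define F where "F = (fact (n - 1) :: real)"
  define I1 where "I1 = ifac (int k)"
  define I2 where "I2 = ifac (int (m + k))"
  define I3 where "I3 = ifac c"
  define D where "D = (real n - real k) * (real n - real k - 1)"
  define Z where "Z = F * 2 powi c * I1 * I2 * I3"
  define A where "A = real m * (real m + real k - 1) + (real m - 1) * of_int c"
  define B where "B = real (m + 1) * (real m + real k) + real m * (of_int c - 1)"
  have P: "Pc m n k = Z * real m"
    using m by (simp add: Pc_def F_def c_def I1_def I2_def I3_def Z_def mult_ac)
  have R1: "Rc m n k = Z * ((real m + real k) * A) / D"
  proof -
    have "Rc m n k = F * 2 powi c * A * I1 * ((m + k) * I2) * I3 / D"
      using ifac_pred[of "int (m + k)"]
      by (simp add: Rc_def F_def c_def I1_def I2_def I3_def D_def A_def)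
    then show ?thesis by (simp add: Z_def mult_ac)
  qed
  have R2: "Rc (m + 1) n k = Z * (of_int c * B) / (2 * D)"
  proof -
    have "cc (m + 1) n k = c - 1" by (simp add: c_def cc_def)
    moreover have "ifac (int (m + 1 + k) - 1) = I2" by (simp add: I2_def)
    moreover have "real (m + 1) + real k - 1 = real m + real k" by simp
    moreover have "real (m + 1) - 1 = real m" by simp
    moreover have "ifac (c - 1) = c * I3" using ifac_pred[of c] by (simp add: I3_def)
    ultimately have "Rc (m + 1) n k = F * 2 powi (c - 1) * B * I1 * I2 * (c * I3) / D"
      unfolding Rc_def F_def I1_def D_def B_def by simp
    moreover have "(2::real) powi (c - 1) = 2 powi c / 2" by (simp add: power_int_diff)
    ultimately show ?thesis by (simp add: Z_def mult_ac)
  qed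
  show ?thesis
  proof (cases "c < 0")
    case True
    then have "Z = 0" by (simp add: I3_def ifac_neg Z_def)
    then show ?thesis using P R1 R2 by simp
  next
    case False
    have cv: "of_int c = real n - real m - 2 * real k" by (simp add: c_def cc_def)
    have "D \<noteq> 0" using False m unfolding D_def c_def cc_def by auto
    have key: "(real m + real k) * A + of_int c * B = real m * D"
      unfolding D_def cv A_def B_def by (simp add: algebra_simps)
    have "Rc m n k + 2 * Rc (m + 1) n k = Z * ((real m + real k) * A) / D + Z * (of_int c * B) / D"
      unfolding R1 R2 by simp
    also have "\<dots> = Z * ((real m + real k) * A + of_int c * B) / D"
      by (simp add: add_divide_distrib distrib_left)
    also have "\<dots> = Z * real m" using key \<open>D \<noteq> 0\<close> by simp
    finally show ?thesis using P by simp
  qed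
qed

definition Tc :: "nat \<Rightarrow> nat \<Rightarrow> real" where
  "Tc n k = 1 / real (n + 1) * real ((n - 2 - k) choose k) * 2 ^ (n - 2 - 2 * k)
             * real ((n + 1) choose (k + 1))"

lemma Rc2:
  assumes n: "n \<ge> 2"
  shows "Rc 2 n k = Tc n k"
proof (cases "2 + 2 * k \<le> n")
  case False
  then have "Rc 2 n k = 0" by (simp add: Rc_def ifac_neg cc_def)
  moreover have "(n - 2 - k) choose k = 0" using False n by (intro binomial_eq_0) linarith
  ultimately show ?thesis by (simp add: Tc_def)
next
  case True
  define c where "c = n - 2 - 2 * k"
  have nc: "n = c + 2 * k + 2" using True c_def by simp
  have ccv: "cc 2 n k = int c" using True by (simp add: cc_def c_def)
  have "Rc 2 n k = fact (n - 1) * 2 ^ c * real n * (1 / fact k) * (1 / fact (k + 1)) * (1 / fact c) /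
        ((real n - real k) * (real n - real k - 1))"
  proof -
    have "ifac (int c) = 1 / fact c" "ifac (int k) = 1 / fact k" "ifac (int (2 + k) - 1) = 1 / fact (k + 1)"
      by (simp_all add: ifac_def nat_add_distrib)
    moreover have "real 2 * (real 2 + real k - 1) + (real 2 - 1) * of_int (int c) = real n"
      using nc by simp
    ultimately show ?thesis unfolding Rc_def ccv by simp
  qed
  also have "\<dots> = fact n * 2 ^ c / (fact k * fact (k + 1) * fact c * ((real n - real k) * (real n - real k - 1)))"
    using nc by (simp add: fact_reduce[of n] field_simps)
  finally have R: "Rc 2 n k = fact n * 2 ^ c / (fact k * fact (k + 1) * fact c * ((real n - real k) * (real n - real k - 1)))" .
  have b1: "real ((n - 2 - k) choose k) = fact (k + c) / (fact k * fact c)"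
  proof -
    have "n - 2 - k = k + c" using nc by simp
    then show ?thesis using binomial_fact[of k "k + c"] by simp
  qed
  have b2: "real ((n + 1) choose (k + 1)) = fact (n + 1) / (fact (k + 1) * fact (n - k))"
    using binomial_fact[of "k + 1" "n + 1"] nc by simp
  have f1: "(fact (n + 1) :: real) = real (n + 1) * fact n" by simp
  have f2: "(fact (n - k) :: real) = (real n - real k) * ((real n - real k - 1) * fact (k + c))"
  proof -
    have e: "n - k = Suc (Suc (k + c))" using nc by simp
    have "(fact (n - k) :: real) = fact (Suc (Suc (k + c)))" by (simp only: e)
    also have "\<dots> = real (Suc (Suc (k + c))) * (real (Suc (k + c)) * fact (k + c))" by (simp only: fact_Suc)
    also have "\<dots> = (real n - real k) * ((real n - real k - 1) * fact (k + c))" using nc by simp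
    finally show ?thesis .
  qed
  have "Tc n k = 1 / real (n + 1) * (fact (k + c) / (fact k * fact c)) * 2 ^ c *
      (real (n + 1) * fact n / (fact (k + 1) * ((real n - real k) * ((real n - real k - 1) * fact (k + c)))))"
    unfolding Tc_def b1 b2 f1 f2 using c_def by simp
  also have "\<dots> = Rc 2 n k"
  proof -
    have p: "real n - real k \<noteq> 0" "real n - real k - 1 \<noteq> 0" using nc by auto
    have x: "real (n + 1) \<noteq> 0" by simp
    have aux: "\<And>x e a d t N b p q :: real. x \<noteq> 0 \<Longrightarrow> e \<noteq> 0 \<Longrightarrow> a \<noteq> 0 \<Longrightarrow> b \<noteq> 0 \<Longrightarrow> d \<noteq> 0
       \<Longrightarrow> p \<noteq> 0 \<Longrightarrow> q \<noteq> 0 \<Longrightarrow>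
       1 / x * (e / (a * d)) * t * (x * N / (b * (p * (q * e)))) = N * t / (a * b * d * (p * q))"
      by (simp add: field_simps)
    show ?thesis unfolding R by (rule aux) (use p x in auto)
  qed
  finally show ?thesis by simp
qed



definition PF :: "nat \<Rightarrow> real poly fps" where
  "PF m = Abs_fps (\<lambda>n. \<Sum>k\<le>n. monom (Pc m n k) k)"

definition RF :: "nat \<Rightarrow> real poly fps" where
  "RF m = Abs_fps (\<lambda>n. \<Sum>k\<le>n. monom (Rc m n k) k)"

lemma Pc_big: "k > n \<Longrightarrow> Pc m n k = 0"
  by (simp add: Pc_def ifac_neg cc_def)

lemma Rc_big: "k > n \<Longrightarrow> Rc m n k = 0"
  by (simp add: Rc_def ifac_neg cc_def)

lemma coeff_sum_monom_le: "(\<And>k. k > n \<Longrightarrow> f k = 0) \<Longrightarrow> coeff (\<Sum>k\<le>n. monom (f k) k) j = f j"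
  by (simp add: coeff_sum)

lemma coeff_PF: "coeff (fps_nth (PF m) n) j = Pc m n j"
  unfolding PF_def by (simp add: coeff_sum_monom_le Pc_big)

lemma coeff_RF: "coeff (fps_nth (RF m) n) j = Rc m n j"
  unfolding RF_def by (simp add: coeff_sum_monom_le Rc_big)

lemma PF0: "PF 0 = 1"
proof (rule fps_ext, rule poly_eqI)
  fix n j
  show "coeff (fps_nth (PF 0) n) j = coeff (fps_nth 1 n) j"
    unfolding coeff_PF by (cases n) (auto simp: Pc_def)
qed

lemma fps_nth_2 [simp]: "fps_nth (2 * A) n = 2 * fps_nth A n"
  by (metis fps_add_nth mult_2)

lemma coeff_2 [simp]: "coeff (2 * p) j = 2 * coeff p j"
  by (metis coeff_add mult_2)

lemma coeff_t0_mult: "coeff (t0 * p) j = (if j = 0 then 0 else coeff p (j - 1))"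
  unfolding t0_def by (simp add: coeff_monom_mult)

lemma PF_rec: "m \<ge> 1 \<Longrightarrow> PF m = fps_X * (PF (m - 1) + 2 * PF m + TT * PF (m + 1))"
proof (rule fps_ext, rule poly_eqI)
  fix n j assume m: "m \<ge> 1"
  show "coeff (fps_nth (PF m) n) j = coeff (fps_nth (fps_X * (PF (m - 1) + 2 * PF m + TT * PF (m + 1))) n) j"
  proof (cases n)
    case 0
    then show ?thesis using m by (simp add: coeff_PF Pc_def ifac_neg cc_def)
  next
    case (Suc n')
    then show ?thesis using Pc_rec[OF m, of n' j] m
      by (simp add: coeff_PF coeff_t0_mult)
  qed
qed

lemma WW_pow_rec: "m \<ge> 1 \<Longrightarrow> WW ^ m = fps_X * (WW ^ (m - 1) + 2 * WW ^ m + TT * WW ^ (m + 1))"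
proof -
  assume m: "m \<ge> 1"
  then obtain m' where m': "m = Suc m'" by (cases m) auto
  have "WW ^ m = WW ^ m' * WW" using m' by simp
  also have "\<dots> = WW ^ m' * (fps_X * (1 + 2 * WW + TT * WW ^ 2))" using WW_eq by simp
  also have "\<dots> = fps_X * (WW ^ m' + 2 * WW ^ Suc m' + TT * WW ^ Suc (Suc m'))"
    by (simp add: algebra_simps power2_eq_square)
  finally show ?thesis using m' by simp
qed

lemma uniq:
  fixes A B :: "nat \<Rightarrow> real poly fps"
  assumes A: "\<And>m. m \<ge> 1 \<Longrightarrow> A m = fps_X * (A (m - 1) + 2 * A m + TT * A (m + 1))"
      and B: "\<And>m. m \<ge> 1 \<Longrightarrow> B m = fps_X * (B (m - 1) + 2 * B m + TT * B (m + 1))"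
      and AB0: "A 0 = B 0"
  shows "A m = B m"
proof -
  have "\<forall>m. fps_nth (A m) n = fps_nth (B m) n" for n
  proof (induction n)
    case 0
    show ?case
    proof
      fix m show "fps_nth (A m) 0 = fps_nth (B m) 0"
      proof (cases "m = 0")
        case True then show ?thesis using AB0 by simp
      next
        case False
        have "fps_nth (A m) 0 = 0" by (subst A[of m]) (use False in auto)
        moreover have "fps_nth (B m) 0 = 0" by (subst B[of m]) (use False in auto)
        ultimately show ?thesis by simp
      qed
    qed
  next
    case (Suc n)
    show ?case
    proof
      fix m show "fps_nth (A m) (Suc n) = fps_nth (B m) (Suc n)"
      proof (cases "m = 0")
        case True then show ?thesis using AB0 by simp
      next
        case False
        then have "fps_nth (A m) (Suc n) = fps_nth (A (m - 1) + 2 * A m + TT * A (m + 1)) n"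
          using A[of m] by (metis One_nat_def Suc_leI diff_Suc_1 fps_X_mult_nth neq0_conv nat.distinct(1))
        also have "\<dots> = fps_nth (B (m - 1) + 2 * B m + TT * B (m + 1)) n"
          using Suc.IH by simp
        also have "\<dots> = fps_nth (B m) (Suc n)"
          using B[of m] False by (metis One_nat_def Suc_leI diff_Suc_1 fps_X_mult_nth neq0_conv nat.distinct(1))
        finally show ?thesis .
      qed
    qed
  qed
  then show ?thesis by (simp add: fps_eq_iff)
qed

lemma PF_WW: "PF m = WW ^ m"
proof (rule uniq[OF PF_rec WW_pow_rec])
  show "PF 0 = WW ^ 0" using PF0 by simp
qed

lemma GG_rel: "GG + 2 * (GG * WW) = WW ^ 2"
proof -
  define E where "E = GG + 2 * (GG * WW) - WW ^ 2"
  have h1: "fps_X * TT * WW * GG + fps_X * WW - GG = 0"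
    using GG_eq by (simp add: algebra_simps)
  have h2: "WW - fps_X * (1 + 2 * WW + TT * WW ^ 2) = 0"
    using WW_eq by simp
  have "(fps_X * TT * WW - 1) * E = (1 + 2 * WW) * (fps_X * TT * WW * GG + fps_X * WW - GG)
      + WW * (WW - fps_X * (1 + 2 * WW + TT * WW ^ 2))"
    unfolding E_def by (simp add: algebra_simps power2_eq_square)
  then have "(fps_X * TT * WW - 1) * E = 0" using h1 h2 by simp
  moreover have "fps_X * TT * WW - 1 \<noteq> 0"
  proof
    assume "fps_X * TT * WW - 1 = 0"
    then have "fps_nth (fps_X * TT * WW - 1) 0 = 0" by simp
    moreover have "fps_nth (fps_X * TT * WW - 1) 0 = -1"
      by (simp add: mult.assoc)
    ultimately show False by simp
  qed
  ultimately have "E = 0" by simp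
  then show ?thesis unfolding E_def by simp
qed

lemma RF_rel: "m \<ge> 2 \<Longrightarrow> RF m + 2 * RF (m + 1) = PF m"
  by (rule fps_ext, rule poly_eqI) (use Rc_tel[of m] in \<open>simp add: coeff_RF coeff_PF\<close>)

lemma RF_zero: "m > n \<Longrightarrow> fps_nth (RF m) n = 0"
  by (rule poly_eqI) (simp add: coeff_RF Rc_zero)

lemma GW_form: "GG * WW ^ j = fps_X ^ (j + 2) * ((1 + TT * GG) * (1 + 2 * WW + TT * WW ^ 2) ^ (j + 1))"
proof -
  define V where "V = 1 + 2 * WW + TT * WW ^ 2"
  have w: "WW = fps_X * V" using WW_eq V_def by simp
  have g: "GG = fps_X * (1 + TT * GG) * WW" by (rule GG_eq)
  have "GG * WW ^ j = fps_X * (1 + TT * GG) * (fps_X * V) * (fps_X * V) ^ j"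
    using g w by metis
  also have "\<dots> = fps_X ^ (j + 2) * ((1 + TT * GG) * V ^ (j + 1))"
    by (simp add: power_mult_distrib algebra_simps)
  finally show ?thesis unfolding V_def .
qed

lemma GW_zero: "n < j + 2 \<Longrightarrow> fps_nth (GG * WW ^ j) n = 0"
  unfolding GW_form fps_X_power_mult_nth by simp

lemma RF_GG: "m \<ge> 2 \<Longrightarrow> fps_nth (RF m) n = fps_nth (GG * WW ^ (m - 2)) n"
proof (induction "n + 1 - m" arbitrary: m)
  case 0
  then have "m > n" by simp
  then show ?case using RF_zero GW_zero[of n "m - 2"] 0 by simp
next
  case (Suc d)
  have IH: "fps_nth (RF (m + 1)) n = fps_nth (GG * WW ^ (m - 1)) n"
    using Suc.hyps(1)[of "m + 1"] Suc.hyps(2) Suc.prems by simp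
  have "RF m = PF m - 2 * RF (m + 1)" using RF_rel[OF Suc.prems] by (simp add: algebra_simps)
  then have "fps_nth (RF m) n = fps_nth (WW ^ m) n - 2 * fps_nth (RF (m + 1)) n"
    by (simp add: PF_WW)
  also have "\<dots> = fps_nth (WW ^ m - 2 * (GG * WW ^ (m - 1))) n" using IH by simp
  also have "WW ^ m - 2 * (GG * WW ^ (m - 1)) = GG * WW ^ (m - 2)"
  proof -
    have e: "GG = WW ^ 2 - 2 * (GG * WW)" by (metis GG_rel add_diff_cancel_right')
    have "GG * WW ^ (m - 2) = (WW ^ 2 - 2 * (GG * WW)) * WW ^ (m - 2)"
      by (rule arg_cong[where f="\<lambda>x. x * WW ^ (m - 2)", OF e])
    also have "\<dots> = WW ^ 2 * WW ^ (m - 2) - 2 * (GG * (WW * WW ^ (m - 2)))"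
      by (simp add: algebra_simps)
    also have "WW ^ 2 * WW ^ (m - 2) = WW ^ m" using Suc.prems by (metis le_add_diff_inverse power_add)
    also have "WW * WW ^ (m - 2) = WW ^ (m - 1)" using Suc.prems
      by (metis Suc_diff_Suc Suc_1 Suc_le_lessD diff_Suc_1 power_Suc)
    finally show ?thesis by simp
  qed
  finally show ?case .
qed

lemma duu_le: "duu p \<le> length p"
  by (induction p rule: duu.induct) auto

lemma count_eq: "n \<ge> 2 \<Longrightarrow> real (card {p. fine_path n p \<and> long_noninitial_ascents p = k}) = Tc n k"
proof -
  assume n: "n \<ge> 2"
  have "{p. fine_path n p \<and> long_noninitial_ascents p = k} = {p \<in> Fi n. duu p = k}"
    by (auto simp: fine_path_def dyck_path_iff has_hill_iff Fi_def Dy_def dyck_lna)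
  then have "real (card {p. fine_path n p \<and> long_noninitial_ascents p = k}) = coeff (Fp n) k"
    by (simp add: coeff_Fp)
  also have "\<dots> = coeff (fps_nth GG n) k" using n by (simp add: GG_nth)
  also have "\<dots> = coeff (fps_nth (RF 2) n) k" using RF_GG[of 2 n] by simp
  also have "\<dots> = Tc n k" by (simp add: coeff_RF Rc2 n)
  finally show ?thesis .
qed

lemma Tc_big: "n \<ge> 2 \<Longrightarrow> j > n \<Longrightarrow> Tc n j = 0"
  by (simp add: Tc_def)

lemma fine_card: "n \<ge> 2 \<Longrightarrow> real (fine_number n) = (\<Sum>j\<in>{0..n}. Tc n j)"
proof -
  assume n: "n \<ge> 2"
  let ?A = "{p. fine_path n p}"
  have finA: "finite ?A"
    by (rule finite_subset[OF _ fin_Dy[of n]]) (auto simp: fine_path_def dyck_path_iff Dy_def)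
  have le: "\<And>p. p \<in> ?A \<Longrightarrow> long_noninitial_ascents p \<le> 2 * n"
  proof -
    fix p assume "p \<in> ?A"
    then have "dyck p" "length p = 2 * n" by (auto simp: fine_path_def dyck_path_iff)
    then show "long_noninitial_ascents p \<le> 2 * n" using duu_le[of p] dyck_lna by simp
  qed
  have eqA: "?A = (\<Union>j\<in>{0..2 * n}. {p. fine_path n p \<and> long_noninitial_ascents p = j})"
    using le by auto
  have "card ?A = (\<Sum>j\<in>{0..2 * n}. card {p. fine_path n p \<and> long_noninitial_ascents p = j})"
    unfolding eqA
    by (rule card_UN_disjoint) (auto intro: finite_subset[OF _ finA])
  then have "real (card ?A) = (\<Sum>j\<in>{0..2 * n}. Tc n j)"
    using count_eq[OF n] by simp
  also have "\<dots> = (\<Sum>j\<in>{0..n}. Tc n j)"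
  proof (rule sum.mono_neutral_right)
    show "\<forall>i\<in>{0..2 * n} - {0..n}. Tc n i = 0" using Tc_big n by auto
  qed auto
  finally show ?thesis by (simp add: fine_number_def)
qed

theorem mainTheorem3:
  fixes n k :: nat
  assumes "n \<ge> 2"
  shows "real (card {p. fine_path n p \<and> long_noninitial_ascents p = k}) =
           1 / real (n + 1) * real ((n - 2 - k) choose k) * 2 ^ (n - 2 - 2 * k)
             * real ((n + 1) choose (k + 1))
       \<and> real (fine_number n) =
           1 / real (n + 1) * (\<Sum>j\<in>{0..n}. real ((n - 2 - j) choose j) * 2 ^ (n - 2 - 2 * j)
             * real ((n + 1) choose (j + 1)))"
proof
  show "real (card {p. fine_path n p \<and> long_noninitial_ascents p = k}) =
           1 / real (n + 1) * real ((n - 2 - k) choose k) * 2 ^ (n - 2 - 2 * k)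
             * real ((n + 1) choose (k + 1))"
    using count_eq[OF assms] by (simp add: Tc_def)
  show "real (fine_number n) =
           1 / real (n + 1) * (\<Sum>j\<in>{0..n}. real ((n - 2 - j) choose j) * 2 ^ (n - 2 - 2 * j)
             * real ((n + 1) choose (j + 1)))"
    using fine_card[OF assms] by (simp add: Tc_def sum_distrib_left mult.assoc)
qed


end
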